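(* There exist topological spaces $K_1, K_2, K_3$, a continuous map $f: K_1 \to K_2$, and closed subsets $R \subseteq K_1 \times K_3$, $S \subseteq K_2 \times K_3$ such that $$\overline{f_!}(R \cap f^*S) \neq \overline{f_!}R \cap S,$$ where $\overline{f_!}T := \mathrm{cl}(f_!T)$ denotes the closure in $K_2 \times K_3$ of the pushforward.
   Context: For a map $f: A \to B$ and relations $T \subseteq A \times C$, $U \subseteq B \times C$: $f_!T = \{(y,z) \in B \times C : \exists x \in A,\ f(x) = y,\ (x,z) \in T\}$ and $f^*U = \{(x,z) \in A \times C : (f(x), z) \in U\}$. Spaces need not be compact (e.g. the paper's setting allows $K_1$ non-closed in a simplex). *)

theory Defs
  imports "HOL-Analysis.Analysis"
begin

definition rel_push :: "('a \<Rightarrow> 'b) \<Rightarrow> ('a \<times> 'c) set \<Rightarrow> ('b \<times> 'c) set" where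
  "rel_push f T = {(y, z). \<exists>x. f x = y \<and> (x, z) \<in> T}"

definition rel_pull :: "'a set \<Rightarrow> ('a \<Rightarrow> 'b) \<Rightarrow> ('b \<times> 'c) set \<Rightarrow> ('a \<times> 'c) set" where
  "rel_pull A f U = {(x, z). x \<in> A \<and> (f x, z) \<in> U}"

end

theory Submission
  imports Defs
begin

theorem mainTheorem10:
  shows "\<exists>(K1 :: real topology) (K2 :: real topology) (K3 :: real topology)
            (f :: real \<Rightarrow> real) R S.
           continuous_map K1 K2 f \<and>
           closedin (prod_topology K1 K3) R \<and>
           closedin (prod_topology K2 K3) S \<and>
           (prod_topology K2 K3) closure_of (rel_push f (R \<inter> rel_pull (topspace K1) f S))
             \<noteq> ((prod_topology K2 K3) closure_of (rel_push f R)) \<inter> S"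
proof -
  let ?K1 = "subtopology euclidean {0<..} :: real topology"
  let ?R = "{0<..} \<times> {0::real} :: (real \<times> real) set"
  let ?S = "{(0::real, 0::real)}"
  have c: "continuous_map ?K1 euclideanreal id"
    by (simp add: continuous_map_from_subtopology)
  have "closedin (subtopology euclidean ({0<..} \<times> UNIV)) ?R"
    unfolding closedin_subtopology
    by (rule exI[of _ "UNIV \<times> {0}"]) (auto simp: closed_Times)
  then have r: "closedin (prod_topology ?K1 euclideanreal) ?R"
    by (simp add: prod_topology_subtopology)
  have s: "closedin (prod_topology euclideanreal euclideanreal) ?S" by simp
  have l: "rel_push id (?R \<inter> rel_pull (topspace ?K1) id ?S) = {}"
    by (auto simp: rel_push_def rel_pull_def)
  have p: "rel_push id ?R = ?R" by (auto simp: rel_push_def)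
  have "closure ?R = {0..} \<times> {0}" by (simp add: closure_Times)
  then have "(prod_topology euclideanreal euclideanreal) closure_of (rel_push id ?R) \<inter> ?S = ?S"
    using p by auto
  then have "(prod_topology euclideanreal euclideanreal) closure_of (rel_push id (?R \<inter> rel_pull (topspace ?K1) id ?S))
     \<noteq> ((prod_topology euclideanreal euclideanreal) closure_of (rel_push id ?R)) \<inter> ?S"
    using l by simp
  with c r s show ?thesis by blast
qed

end
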